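(* Let $U$ be an $r$-dimensional subspace of $\mathbb{R}^d$ with $\mu(U)\le\mu_0$, let $\tilde U$ be a subspace of $U$, and let $x_t\in U$. Let $\delta\in(0,1)$ and let $\Omega$ be a list of $m$ indices sampled independently and uniformly with replacement from $[d]$. (i) If $x_t\notin\tilde U$ and $m\ge 32r\mu_0\log^2(2r/\delta)$, then with probability at least $1-4\delta$, $\|x_{t\Omega}-\mathcal{P}_{\tilde U_\Omega}x_{t\Omega}\|_2>0$. (ii) If $x_t\in\tilde U$, then $\|x_{t\Omega}-\mathcal{P}_{\tilde U_\Omega}x_{t\Omega}\|_2=0$ whenever $\tilde U_\Omega^T\tilde U_\Omega$ is invertible.
   Context: For an $r$-dimensional subspace $U\subseteq\mathbb{R}^d$, $\mu(U)=\frac{d}{r}\max_{i\in[d]}\|\mathcal{P}_Ue_i\|_2^2$. For a list $\Omega\in[d]^m$ and $z\in\mathbb{R}^d$, $z_\Omega\in\mathbb{R}^m$ has $j$th entry $z(\Omega(j))$. For a subspace $\tilde U$ with orthonormal basis matrix (also denoted $\tilde U$), $\tilde U_\Omega$ is the matrix whose $j$th row is row $\Omega(j)$ of $\tilde U$, and $\mathcal{P}_{\tilde U_\Omega}$ is the orthogonal projection onto the column span of $\tilde U_\Omega$ (for $\tilde U=\{0\}$ this projection is $0$). *)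

theory Defs
  imports "HOL-Analysis.Analysis" "HOL-Probability.Probability"
begin

text \<open>Orthogonal projection onto a (closed) subspace S of a Euclidean space:
  the closest point of S. For a linear subspace this is exactly the orthogonal projection.\<close>
definition orth_proj :: "('a::euclidean_space) set \<Rightarrow> 'a \<Rightarrow> 'a" where
  "orth_proj S x = closest_point S x"

definition coherence :: "(real^'d) set \<Rightarrow> real" where
  "coherence U = real CARD('d) / real (dim U) *
     Max (range (\<lambda>i::'d. (norm (orth_proj U (axis i 1)))\<^sup>2))"

text \<open>For Omega : [m] -> [d] (a list of m indices), z_Omega in R^m.\<close>
definition restr :: "('m::finite \<Rightarrow> 'd::finite) \<Rightarrow> real^'d \<Rightarrow> real^'m" where
  "restr \<Omega> z = (\<chi> j. z $ \<Omega> j)"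

text \<open>A list of vectors forming the columns of an orthonormal basis matrix.\<close>
definition orthonormal_list :: "(real^'d) list \<Rightarrow> bool" where
  "orthonormal_list bs \<longleftrightarrow>
     (\<forall>a<length bs. \<forall>b<length bs. bs ! a \<bullet> bs ! b = (if a = b then 1 else 0))"

text \<open>Column span of the sampled basis matrix Utilde_Omega (rows Omega(j) of Utilde).\<close>
definition sampled_colspan :: "(real^'d) list \<Rightarrow> ('m::finite \<Rightarrow> 'd::finite) \<Rightarrow> (real^'m) set" where
  "sampled_colspan bs \<Omega> = span ((\<lambda>b. restr \<Omega> b) ` set bs)"

text \<open>Entries of the k x k matrix Utilde_Omega^T Utilde_Omega, k = length bs.\<close>
definition sampled_gram :: "(real^'d) list \<Rightarrow> ('m::finite \<Rightarrow> 'd::finite) \<Rightarrow> nat \<Rightarrow> nat \<Rightarrow> real" where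
  "sampled_gram bs \<Omega> a b = restr \<Omega> (bs ! a) \<bullet> restr \<Omega> (bs ! b)"

definition sq_invertible :: "nat \<Rightarrow> (nat \<Rightarrow> nat \<Rightarrow> real) \<Rightarrow> bool" where
  "sq_invertible k A \<longleftrightarrow> (\<exists>B. (\<forall>a<k. \<forall>c<k. (\<Sum>l<k. A a l * B l c) = (if a = c then 1 else 0)) \<and>
                              (\<forall>a<k. \<forall>c<k. (\<Sum>l<k. B a l * A l c) = (if a = c then 1 else 0)))"

definition residual :: "(real^'d) list \<Rightarrow> ('m::finite \<Rightarrow> 'd::finite) \<Rightarrow> real^'d \<Rightarrow> real" where
  "residual bs \<Omega> x = norm (restr \<Omega> x - orth_proj (sampled_colspan bs \<Omega>) (restr \<Omega> x))"

end

theory Submission imports Defs begin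

lemma bessel:
  fixes B :: "(real^'d) set"
  assumes fin: "finite B" and orth: "pairwise orthogonal B" and nB: "\<And>b. b \<in> B \<Longrightarrow> norm b = 1"
  shows "(\<Sum>b\<in>B. (b \<bullet> w)\<^sup>2) \<le> (norm w)\<^sup>2"
proof -
  define s where "s = (\<Sum>b\<in>B. (b \<bullet> w) *\<^sub>R b)"
  have bc: "b \<bullet> c = (if c = b then 1 else 0)" if "b \<in> B" "c \<in> B" for b c
  proof (cases "c = b")
    case True then show ?thesis using nB[OF that(1)] by (simp add: power2_norm_eq_inner[symmetric])
  next
    case False then show ?thesis using orth that unfolding pairwise_def orthogonal_def by auto
  qed
  have sw: "s \<bullet> w = (\<Sum>b\<in>B. (b \<bullet> w)\<^sup>2)"
    unfolding s_def by (simp add: inner_sum_left power2_eq_square)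
  have ss: "s \<bullet> s = (\<Sum>b\<in>B. (b \<bullet> w)\<^sup>2)"
  proof -
    have "s \<bullet> s = (\<Sum>b\<in>B. (b \<bullet> w) * (\<Sum>c\<in>B. (c \<bullet> w) * (b \<bullet> c)))"
      unfolding s_def inner_sum_left inner_sum_right inner_scaleR_left inner_scaleR_right sum_distrib_left
      by (subst sum.swap) (simp add: mult_ac inner_commute)
    also have "\<dots> = (\<Sum>b\<in>B. (b \<bullet> w) * (b \<bullet> w))"
    proof (rule sum.cong[OF refl])
      fix b assume b: "b \<in> B"
      have "(\<Sum>c\<in>B. (c \<bullet> w) * (b \<bullet> c)) = (\<Sum>c\<in>B. if c = b then c \<bullet> w else 0)"
        by (rule sum.cong[OF refl]) (simp add: bc[OF b])
      also have "\<dots> = b \<bullet> w" using b fin by (simp add: sum.delta')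
      finally show "(b \<bullet> w) * (\<Sum>c\<in>B. (c \<bullet> w) * (b \<bullet> c)) = (b \<bullet> w) * (b \<bullet> w)" by simp
    qed
    finally show ?thesis by (simp add: power2_eq_square)
  qed
  have "0 \<le> (w - s) \<bullet> (w - s)" by simp
  also have "\<dots> = w \<bullet> w - 2 * (s \<bullet> w) + s \<bullet> s" by (simp add: inner_diff inner_commute)
  finally show ?thesis using sw ss by (simp add: power2_norm_eq_inner)
qed

lemma proj_orth:
  fixes U :: "(real^'d) set"
  assumes "subspace U" "z \<in> U"
  shows "(w - closest_point U w) \<bullet> z = 0"
proof -
  have cl: "closed U" using assms(1) closed_subspace by blast
  have cv: "convex U" using assms(1) subspace_imp_convex by blast
  have ne: "U \<noteq> {}" using assms(2) by auto
  let ?p = "closest_point U w"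
  have p: "?p \<in> U" using closest_point_in_set[OF cl ne] .
  have "(w - ?p) \<bullet> ((?p + z) - ?p) \<le> 0"
    by (rule closest_point_dot[OF cv cl]) (simp add: p assms subspace_add)
  moreover have "(w - ?p) \<bullet> ((?p - z) - ?p) \<le> 0"
    by (rule closest_point_dot[OF cv cl]) (simp add: p assms subspace_diff)
  ultimately show ?thesis by (simp add: inner_diff_right)
qed

definition Mx :: "(real^'d) set \<Rightarrow> real" where
  "Mx U = Max (range (\<lambda>i::'d. (norm (orth_proj U (axis i 1)))\<^sup>2))"

lemma trace_bound:
  fixes U V :: "(real^'d) set"
  assumes U: "subspace U" and V: "subspace V" and VU: "V \<subseteq> U"
  shows "real (dim V) \<le> Mx U * card {i. \<exists>u\<in>V. u $ i \<noteq> 0}"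
proof -
  obtain B where BV: "B \<subseteq> V" and orth: "pairwise orthogonal B" and nB: "\<And>x. x \<in> B \<Longrightarrow> norm x = 1"
    and ind: "independent B" and cB: "card B = dim V" and sB: "span B = V"
    using orthonormal_basis_subspace[OF V] by metis
  have fin: "finite B" using ind independent_imp_finite by blast
  let ?I = "{i. \<exists>u\<in>V. u $ i \<noteq> 0}"
  have "real (dim V) = (\<Sum>b\<in>B. (norm b)\<^sup>2)" using cB nB by simp
  also have "\<dots> = (\<Sum>b\<in>B. \<Sum>i\<in>UNIV. (b $ i)\<^sup>2)"
    unfolding power2_norm_eq_inner inner_vec_def by (simp add: power2_eq_square)
  also have "\<dots> = (\<Sum>i\<in>UNIV. \<Sum>b\<in>B. (b $ i)\<^sup>2)" by (rule sum.swap)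
  also have "\<dots> = (\<Sum>i\<in>?I. \<Sum>b\<in>B. (b $ i)\<^sup>2)"
  proof (rule sum.mono_neutral_right)
    show "\<forall>i\<in>UNIV - ?I. (\<Sum>b\<in>B. (b $ i)\<^sup>2) = 0"
    proof
      fix i assume "i \<in> UNIV - ?I"
      then have "\<forall>u\<in>V. u $ i = 0" by auto
      then show "(\<Sum>b\<in>B. (b $ i)\<^sup>2) = 0" using BV by (intro sum.neutral) auto
    qed
  qed auto
  also have "\<dots> \<le> (\<Sum>i\<in>?I. Mx U)"
  proof (rule sum_mono)
    fix i :: 'd
    let ?p = "closest_point U (axis i (1::real))"
    have "(\<Sum>b\<in>B. (b $ i)\<^sup>2) = (\<Sum>b\<in>B. (b \<bullet> ?p)\<^sup>2)"
    proof (rule sum.cong[OF refl])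
      fix b assume "b \<in> B"
      then have bU: "b \<in> U" using BV VU by auto
      have "b $ i = b \<bullet> axis i 1" by (simp add: inner_axis)
      also have "\<dots> = b \<bullet> (axis i 1 - ?p) + b \<bullet> ?p" by (simp add: inner_diff_right)
      also have "b \<bullet> (axis i 1 - ?p) = 0" using proj_orth[OF U bU, of "axis i 1"] by (simp add: inner_commute)
      finally show "(b $ i)\<^sup>2 = (b \<bullet> ?p)\<^sup>2" by simp
    qed
    also have "\<dots> \<le> (norm ?p)\<^sup>2" by (rule bessel[OF fin orth nB])
    also have "\<dots> \<le> Mx U" unfolding Mx_def orth_proj_def by (rule Max_ge) auto
    finally show "(\<Sum>b\<in>B. (b $ i)\<^sup>2) \<le> Mx U" .
  qed
  also have "\<dots> = Mx U * card ?I" by simp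
  finally show ?thesis .
qed

lemma subspace_coord0: "subspace {u::real^'d. u $ i = 0}"
  unfolding subspace_def by auto

lemma dim_cut:
  fixes V :: "(real^'d) set"
  assumes V: "subspace V"
  shows "real (dim (V \<inter> {u. u $ i = 0})) \<le> real (dim V) - (if \<exists>u\<in>V. u $ i \<noteq> 0 then 1 else 0)"
proof (cases "\<exists>u\<in>V. u $ i \<noteq> 0")
  case True
  have sI: "subspace (V \<inter> {u. u $ i = 0})" using V subspace_coord0 subspace_inter by blast
  have "V \<inter> {u. u $ i = 0} \<subset> V" using True by auto
  moreover have e1: "span (V \<inter> {u. u $ i = 0}) = V \<inter> {u. u $ i = 0}" using sI by simp
  moreover have e2: "span V = V" using V by simp
  ultimately have "span (V \<inter> {u. u $ i = 0}) \<subset> span V" by (simp only: e1 e2)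
  then have "dim (V \<inter> {u. u $ i = 0}) < dim V" by (rule dim_psubset)
  then show ?thesis using True by simp
next
  case False
  then have "V \<inter> {u. u $ i = 0} = V" by auto
  then show ?thesis using False by simp
qed

lemma step_bound:
  fixes U V :: "(real^'d) set"
  assumes U: "subspace U" and V: "subspace V" and VU: "V \<subseteq> U" and M: "Mx U > 0"
  shows "(\<Sum>i\<in>UNIV. real (dim (V \<inter> {u. u $ i = 0}))) \<le> real (dim V) * (real CARD('d) - 1 / Mx U)"
proof -
  let ?I = "{i. \<exists>u\<in>V. u $ i \<noteq> 0}"
  have "(\<Sum>i\<in>UNIV. real (dim (V \<inter> {u. u $ i = 0}))) \<le>
        (\<Sum>i\<in>UNIV. real (dim V) - (if i \<in> ?I then 1 else 0))"
    by (rule sum_mono) (use dim_cut[OF V] in simp)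
  also have "\<dots> = real CARD('d) * real (dim V) - real (card ?I)"
    by (simp add: sum_subtractf sum.If_cases)
  also have "\<dots> \<le> real CARD('d) * real (dim V) - real (dim V) / Mx U"
  proof -
    have "real (dim V) \<le> Mx U * card ?I" by (rule trace_bound[OF U V VU])
    then have "real (dim V) / Mx U \<le> card ?I" using M by (simp add: divide_le_eq mult.commute)
    then show ?thesis by simp
  qed
  also have "\<dots> = real (dim V) * (real CARD('d) - 1 / Mx U)" by (simp add: algebra_simps)
  finally show ?thesis .
qed

definition Zs :: "(real^'d) set \<Rightarrow> 'd list \<Rightarrow> (real^'d) set" where
  "Zs V xs = V \<inter> {u. \<forall>i\<in>set xs. u $ i = 0}"

lemma subspace_Zs: "subspace V \<Longrightarrow> subspace (Zs V xs)"
  unfolding Zs_def subspace_def by auto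

lemma sum_bound:
  fixes U :: "(real^'d) set"
  assumes U: "subspace U" and M: "Mx U > 0" and c: "real CARD('d) - 1 / Mx U \<ge> 0"
  shows "subspace V \<Longrightarrow> V \<subseteq> U \<Longrightarrow>
    (\<Sum>xs\<in>{xs. set xs \<subseteq> UNIV \<and> length xs = n}. real (dim (Zs V xs))) \<le> real (dim V) * (real CARD('d) - 1 / Mx U) ^ n"
proof (induction n arbitrary: V)
  case 0
  have "{xs::'d list. set xs \<subseteq> UNIV \<and> length xs = 0} = {[]}" by auto
  then show ?case by (simp add: Zs_def)
next
  case (Suc n)
  let ?c = "real CARD('d) - 1 / Mx U"
  let ?L = "{xs::'d list. set xs \<subseteq> UNIV \<and> length xs = n}"
  have fin: "finite ?L" by (rule finite_lists_length_eq) simp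
  have "(\<Sum>xs\<in>{xs. set xs \<subseteq> UNIV \<and> length xs = Suc n}. real (dim (Zs V xs)))
      = (\<Sum>p\<in>?L \<times> UNIV. real (dim (Zs V (snd p # fst p))))"
    unfolding lists_length_Suc_eq
    by (subst sum.reindex) (auto simp: inj_on_def case_prod_beta intro!: sum.cong)
  also have "\<dots> = (\<Sum>i\<in>UNIV. \<Sum>xs\<in>?L. real (dim (Zs (V \<inter> {u. u $ i = 0}) xs)))"
  proof -
    have "\<And>xs i. Zs V (i # xs) = Zs (V \<inter> {u. u $ i = 0}) xs" unfolding Zs_def by auto
    then have "(\<Sum>p\<in>?L \<times> UNIV. real (dim (Zs V (snd p # fst p)))) =
       (\<Sum>xs\<in>?L. \<Sum>i\<in>UNIV. real (dim (Zs (V \<inter> {u. u $ i = 0}) xs)))"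
      by (simp add: sum.cartesian_product case_prod_beta)
    also have "\<dots> = (\<Sum>i\<in>UNIV. \<Sum>xs\<in>?L. real (dim (Zs (V \<inter> {u. u $ i = 0}) xs)))"
      by (rule sum.swap)
    finally show ?thesis .
  qed
  also have "\<dots> \<le> (\<Sum>i\<in>UNIV. real (dim (V \<inter> {u. u $ i = 0})) * ?c ^ n)"
  proof (rule sum_mono)
    fix i
    have "subspace (V \<inter> {u. u $ i = 0})" using Suc.prems subspace_coord0 subspace_inter by blast
    moreover have "V \<inter> {u. u $ i = 0} \<subseteq> U" using Suc.prems by auto
    ultimately show "(\<Sum>xs\<in>?L. real (dim (Zs (V \<inter> {u. u $ i = 0}) xs))) \<le> real (dim (V \<inter> {u. u $ i = 0})) * ?c ^ n"
      by (rule Suc.IH)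
  qed
  also have "\<dots> = (\<Sum>i\<in>UNIV. real (dim (V \<inter> {u. u $ i = 0}))) * ?c ^ n" by (simp add: sum_distrib_right)
  also have "\<dots> \<le> (real (dim V) * ?c) * ?c ^ n"
    by (rule mult_right_mono[OF step_bound[OF U Suc.prems(1) Suc.prems(2) M]]) (use c in simp)
  finally show ?case by simp
qed

lemma linear_restr: "linear (restr \<Omega>)"
  by (rule linearI) (simp_all add: restr_def vec_eq_iff)

lemma restr_in_colspan:
  assumes "x \<in> span (set bs)"
  shows "restr \<Omega> x \<in> sampled_colspan bs \<Omega>"
  unfolding sampled_colspan_def span_linear_image[OF linear_restr] using assms by blast

lemma residual_zero:
  assumes "x \<in> span (set bs)"
  shows "residual bs \<Omega> x = 0"
  unfolding residual_def orth_proj_def using closest_point_self[OF restr_in_colspan[OF assms, of \<Omega>]] by simp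

lemma residual_pos:
  fixes U :: "(real^'d) set" and \<Omega> :: "'m::finite \<Rightarrow> 'd::finite"
  assumes U: "subspace U" and bU: "span (set bs) \<subseteq> U" and xU: "x \<in> U" and xn: "x \<notin> span (set bs)"
    and inj: "\<forall>u\<in>U. (\<forall>j. u $ \<Omega> j = 0) \<longrightarrow> u = 0"
  shows "residual bs \<Omega> x > 0"
proof -
  let ?S = "sampled_colspan bs \<Omega>"
  let ?y = "restr \<Omega> x"
  have cl: "closed ?S" unfolding sampled_colspan_def by (rule closed_span)
  have ne: "?S \<noteq> {}" unfolding sampled_colspan_def using span_zero by blast
  have yn: "?y \<notin> ?S"
  proof
    assume "?y \<in> ?S"
    then obtain z where z: "z \<in> span (set bs)" and yz: "?y = restr \<Omega> z"
      unfolding sampled_colspan_def span_linear_image[OF linear_restr] by blast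
    have "x - z \<in> U" using z bU xU U subspace_diff by blast
    moreover have "\<forall>j. (x - z) $ \<Omega> j = 0" using yz by (simp add: restr_def vec_eq_iff)
    ultimately have "x - z = 0" using inj by blast
    then show False using z xn by simp
  qed
  have "closest_point ?S ?y \<in> ?S" by (rule closest_point_in_set[OF cl ne])
  then have "?y - closest_point ?S ?y \<noteq> 0" using yn by auto
  then show ?thesis unfolding residual_def orth_proj_def by simp
qed

lemma ln2_ge: "1/32 \<le> ln (2::real)"
proof -
  have "norm (exp (1/32::real)) \<le> 2" by (rule exp_bound_half) simp
  then have "exp (1/32::real) \<le> 2" by simp
  then show ?thesis using ln_ge_iff[of 2 "1/32"] by simp
qed

theorem corollary1:
  fixes U :: "(real^'d) set" and r :: nat and \<mu>0 :: real
    and bs :: "(real^'d) list" and x :: "real^'d" and \<delta> :: real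
  assumes "subspace U" and "dim U = r" and "coherence U \<le> \<mu>0"
    and "orthonormal_list bs" and "span (set bs) \<subseteq> U"
    and "x \<in> U"
    and "0 < \<delta>" and "\<delta> < 1"
  shows "(x \<notin> span (set bs) \<and>
          real CARD('m::finite) \<ge> 32 * real r * \<mu>0 * (ln (2 * real r / \<delta>))\<^sup>2 \<longrightarrow>
          measure_pmf.prob (pmf_of_set (UNIV :: ('m \<Rightarrow> 'd) set))
             {\<Omega>. residual bs \<Omega> x > 0} \<ge> 1 - 4 * \<delta>)
       \<and> (x \<in> span (set bs) \<longrightarrow>
          (\<forall>\<Omega> :: 'm \<Rightarrow> 'd. sq_invertible (length bs) (sampled_gram bs \<Omega>) \<longrightarrow>
             residual bs \<Omega> x = 0))"
proof (intro conjI impI allI)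
  fix \<Omega> :: "'m \<Rightarrow> 'd"
  assume "x \<in> span (set bs)"
  then show "residual bs \<Omega> x = 0" by (rule residual_zero)
next
  assume H: "x \<notin> span (set bs) \<and>
          real CARD('m) \<ge> 32 * real r * \<mu>0 * (ln (2 * real r / \<delta>))\<^sup>2"
  note U = assms(1) and dU = assms(2) and coh = assms(3) and bU = assms(5) and xU = assms(6)
  have xn: "x \<notin> span (set bs)" using H by blast
  define d where "d = CARD('d)"
  define m where "m = CARD('m)"
  define L where "L = ln (2 * real r / \<delta>)"
  have mge: "real m \<ge> 32 * real r * \<mu>0 * L\<^sup>2" using H unfolding m_def L_def by blast
  have "x \<noteq> 0" using xn span_zero by metis
  then have "\<not> U \<subseteq> {0}" using xU by blast
  then have r1: "r \<ge> 1" using dU by (metis dim_eq_0 less_one not_le)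
  define MU where "MU = Mx U"
  have "real r \<le> MU * card {i. \<exists>u\<in>U. u $ i \<noteq> 0}"
    using trace_bound[OF U U order_refl] dU unfolding MU_def by simp
  moreover have "card {i::'d. \<exists>u\<in>U. u $ i \<noteq> 0} \<le> d" unfolding d_def by (rule card_mono) auto
  moreover have "MU \<ge> 0" unfolding MU_def Mx_def by (rule order_trans[OF _ Max_ge[of _ "(norm (orth_proj U (axis undefined 1)))\<^sup>2"]]) auto
  ultimately have rMd: "real r \<le> MU * d" by (meson of_nat_le_iff mult_left_mono order_trans)
  have MU0: "MU > 0" using rMd r1 by (cases "MU = 0") (auto simp: \<open>MU \<ge> 0\<close> less_le)
  have d0: "real d > 0" unfolding d_def by simp
  have cge: "real CARD('d) - 1 / Mx U \<ge> 0"
  proof -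
    have "1 \<le> MU * d" using rMd r1 by linarith
    then have "1 / MU \<le> d" using MU0 by (simp add: divide_le_eq mult.commute)
    then show ?thesis unfolding MU_def d_def by simp
  qed
  define q where "q = 1 / (d * MU)"
  have cq: "(real CARD('d) - 1 / Mx U) = d * (1 - q)"
    unfolding q_def MU_def[symmetric] d_def[symmetric] using d0 MU0 by (simp add: field_simps)
  have q1: "1 - q \<ge> 0" using cge cq d0 by (simp add: zero_le_mult_iff)
  obtain es :: "'m list" where es: "set es = UNIV" "distinct es"
    using finite_distinct_list[of "UNIV :: 'm set"] by auto
  have les: "length es = m" unfolding m_def using distinct_card[OF es(2)] es(1) by simp
  define Zo where "Zo \<Omega> = Zs U (map \<Omega> es)" for \<Omega> :: "'m \<Rightarrow> 'd"
  define Bd where "Bd = {\<Omega>. \<not> Zo \<Omega> \<subseteq> {0}}"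
  let ?L = "{xs::'d list. set xs \<subseteq> UNIV \<and> length xs = m}"
  have injm: "inj (\<lambda>\<Omega>::'m\<Rightarrow>'d. map \<Omega> es)"
    by (rule injI) (metis es(1) map_eq_conv UNIV_I ext)
  have "(\<Sum>\<Omega>\<in>UNIV. real (dim (Zo \<Omega>))) = (\<Sum>xs\<in>(\<lambda>\<Omega>. map \<Omega> es) ` UNIV. real (dim (Zs U xs)))"
    unfolding Zo_def by (simp add: sum.reindex[OF injm])
  also have "\<dots> \<le> (\<Sum>xs\<in>?L. real (dim (Zs U xs)))"
    by (rule sum_mono2) (use finite_lists_length_eq[of "UNIV::'d set" m] in \<open>auto simp: les\<close>)
  also have "\<dots> \<le> real (dim U) * (real CARD('d) - 1 / Mx U) ^ m"
    by (rule sum_bound[OF U _ cge U order_refl]) (simp add: MU0[unfolded MU_def])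
  finally have sb: "(\<Sum>\<Omega>\<in>UNIV. real (dim (Zo \<Omega>))) \<le> real r * (d * (1 - q)) ^ m"
    using dU cq by simp
  have "real (card Bd) = (\<Sum>\<Omega>\<in>Bd. 1)" by simp
  also have "\<dots> \<le> (\<Sum>\<Omega>\<in>Bd. real (dim (Zo \<Omega>)))"
    by (rule sum_mono) (auto simp: Bd_def Suc_le_eq simp del: dim_eq_0 dest: dim_eq_0[THEN iffD1])
  also have "\<dots> \<le> (\<Sum>\<Omega>\<in>UNIV. real (dim (Zo \<Omega>)))" by (rule sum_mono2) auto
  finally have cB: "real (card Bd) \<le> real r * (d * (1 - q)) ^ m" using sb by linarith
  have good: "UNIV - Bd \<subseteq> {\<Omega>. residual bs \<Omega> x > 0}"
  proof
    fix \<Omega> :: "'m \<Rightarrow> 'd" assume "\<Omega> \<in> UNIV - Bd"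
    then have Z: "Zo \<Omega> \<subseteq> {0}" unfolding Bd_def by auto
    have "\<forall>u\<in>U. (\<forall>j. u $ \<Omega> j = 0) \<longrightarrow> u = 0"
    proof (intro ballI impI)
      fix u assume "u \<in> U" "\<forall>j. u $ \<Omega> j = 0"
      then have "u \<in> Zo \<Omega>" unfolding Zo_def Zs_def by auto
      then show "u = 0" using Z by auto
    qed
    then show "\<Omega> \<in> {\<Omega>. residual bs \<Omega> x > 0}" using residual_pos[OF U bU xU xn] by blast
  qed
  define N where "N = CARD('m \<Rightarrow> 'd)"
  have N: "real N = real d ^ m" unfolding N_def d_def m_def by (simp add: card_fun)
  have Npos: "real N > 0" using N d0 by simp
  have "real N - real (card Bd) \<le> real (card {\<Omega>::'m\<Rightarrow>'d. residual bs \<Omega> x > 0})"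
  proof -
    have "card (UNIV - Bd) \<le> card {\<Omega>::'m\<Rightarrow>'d. residual bs \<Omega> x > 0}" by (rule card_mono[OF _ good]) simp
    moreover have "card (UNIV - Bd) = N - card Bd" unfolding N_def by (simp add: card_Diff_subset)
    ultimately show ?thesis by linarith
  qed
  then have pr: "measure_pmf.prob (pmf_of_set (UNIV :: ('m \<Rightarrow> 'd) set)) {\<Omega>. residual bs \<Omega> x > 0}
      \<ge> 1 - real r * (1 - q) ^ m"
  proof -
    assume a: "real N - real (card Bd) \<le> real (card {\<Omega>::'m\<Rightarrow>'d. residual bs \<Omega> x > 0})"
    have pe: "measure_pmf.prob (pmf_of_set (UNIV :: ('m \<Rightarrow> 'd) set)) {\<Omega>. residual bs \<Omega> x > 0}
        = real (card {\<Omega>::'m\<Rightarrow>'d. residual bs \<Omega> x > 0}) / real N"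
      unfolding N_def by (subst measure_pmf_of_set) auto
    have "1 - real r * (1 - q) ^ m = (real N - real r * (d * (1 - q)) ^ m) / real N"
      unfolding power_mult_distrib N[symmetric] using Npos by (simp add: divide_simps algebra_simps)
    also have "\<dots> \<le> (real N - real (card Bd)) / real N"
      using cB Npos by (intro divide_right_mono) auto
    also have "\<dots> \<le> real (card {\<Omega>::'m\<Rightarrow>'d. residual bs \<Omega> x > 0}) / real N"
      using a Npos by (intro divide_right_mono) auto
    finally show ?thesis using pe by simp
  qed
  have coh_eq: "coherence U = real d / real r * MU"
    unfolding coherence_def MU_def Mx_def d_def dU ..
  have Lge: "L \<ge> 1/32"
  proof -
    have "2 \<le> 2 * real r / \<delta>" using r1 assms(7,8) by (simp add: le_divide_eq)
    then have "ln 2 \<le> L" unfolding L_def by simp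
    then show ?thesis using ln2_ge by linarith
  qed
  have "real m \<ge> d * MU * L"
  proof -
    have "32 * real r * \<mu>0 * L\<^sup>2 \<ge> 32 * real r * coherence U * L\<^sup>2"
      using coh by (intro mult_right_mono mult_left_mono) auto
    also have "32 * real r * coherence U * L\<^sup>2 = d * MU * (32 * L * L)"
      using r1 unfolding coh_eq by (simp add: field_simps power2_eq_square)
    also have "\<dots> \<ge> d * MU * L"
    proof (rule mult_left_mono)
      show "L \<le> 32 * L * L" using mult_right_mono[of 1 "32*L" L] Lge by simp
      show "0 \<le> d * MU" using MU0 by simp
    qed
    finally show ?thesis using mge by linarith
  qed
  then have qm: "q * m \<ge> L" unfolding q_def using d0 MU0 by (simp add: field_simps)
  have "(1 - q) ^ m \<le> exp (- q) ^ m"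
    by (rule power_mono[OF _ q1]) (metis exp_ge_add_one_self uminus_add_conv_diff add.commute diff_conv_add_uminus)
  also have "\<dots> = exp (- (q * m))" by (simp add: exp_of_nat_mult[symmetric] mult.commute)
  also have "\<dots> \<le> exp (- L)" using qm by simp
  also have "\<dots> = \<delta> / (2 * real r)" unfolding L_def using r1 assms(7) by (simp add: exp_minus ln_div exp_diff)
  finally have "real r * (1 - q) ^ m \<le> real r * (\<delta> / (2 * real r))" using r1 by (intro mult_left_mono) auto
  also have "\<dots> = \<delta> / 2" using r1 by simp
  finally show "measure_pmf.prob (pmf_of_set (UNIV :: ('m \<Rightarrow> 'd) set)) {\<Omega>. residual bs \<Omega> x > 0} \<ge> 1 - 4 * \<delta>"
    using pr assms(7) by linarith
qed

end
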